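(* Let $T$ be a rooted binary tree with black/white-coloured leaves and the induced node colouring and classification as described in the context. No SPR operation on $T$ belonging to the class $(\mathrm{W},\mathrm{r},\mathrm{B},\mathrm{b})$ produces a compatible tree.
   Context: All trees are rooted binary trees; every non-leaf node has exactly two children and every non-root node $n$ has a parent $\mathrm{pa}(n)$. A "subtree" always means a node together with all of its descendants. Colouring: each leaf is coloured black (B) or white (W); an internal node is black if both children are black, white if both children are white, and grey (G) otherwise. A subtree is black (resp. white) if all its nodes are black (resp. white); it is maximal if no strictly larger subtree containing it is black (resp. white). Classification: a black or white node is of type "r" if it is the root of a maximal subtree of its own colour, and of type "b" otherwise; all grey nodes are of type "b" by convention. A tree is compatible if it contains at most one maximal black subtree. SPR operation $(u,v)$ on $T$: $u$ is a non-root node, $v$ is a node with $v\notin\{u,\mathrm{pa}(u)\}$ and $v$ not a descendant of $u$; the subtree rooted at $u$ is pruned (the edge to $u$ is removed and $\mathrm{pa}(u)$ deleted, its other child taking its place), then regrafted by inserting a new node on the edge from $v$ to its parent (or as a new root above $v$ if $v$ is the root) whose two children are $v$ and $u$; colours of the resulting tree are recomputed by the same rule. The operation belongs to class $(x,y,z,w)$ where $x,z\in\{\mathrm{B},\mathrm{W},\mathrm{G}\}$ are the colours in $T$ of $u$ and $v$, and $y,w\in\{\mathrm{r},\mathrm{b}\}$ their classifications in $T$. *)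

theory Defs
  imports Main "HOL-Library.Sublist"
begin

text \<open>Rooted binary trees whose leaves are coloured black or white.
  Nodes are addressed by positions: paths from the root
  (False = left child, True = right child).\<close>

datatype leafcol = LBlack | LWhite

datatype tree = Leaf leafcol | Node tree tree

datatype colour = B | W | G

datatype cls = R | Bc

fun tcolour :: "tree \<Rightarrow> colour" where
  "tcolour (Leaf LBlack) = B"
| "tcolour (Leaf LWhite) = W"
| "tcolour (Node l r) =
     (if tcolour l = B \<and> tcolour r = B then B
      else if tcolour l = W \<and> tcolour r = W then W else G)"

fun positions :: "tree \<Rightarrow> bool list set" where
  "positions (Leaf c) = {[]}"
| "positions (Node l r) =
     insert [] ((Cons False) ` positions l \<union> (Cons True) ` positions r)"

text \<open>Subtree rooted at a position (junk value outside positions).\<close>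
fun sub :: "tree \<Rightarrow> bool list \<Rightarrow> tree" where
  "sub t [] = t"
| "sub (Node l r) (b # p) = sub (if b then r else l) p"
| "sub (Leaf c) (b # p) = Leaf c"

definition node_colour :: "tree \<Rightarrow> bool list \<Rightarrow> colour" where
  "node_colour t p = tcolour (sub t p)"

definition mono_subtree :: "colour \<Rightarrow> tree \<Rightarrow> bool list \<Rightarrow> bool" where
  "mono_subtree c t p \<longleftrightarrow> p \<in> positions t \<and>
     (\<forall>q. p @ q \<in> positions t \<longrightarrow> node_colour t (p @ q) = c)"

definition maximal_mono :: "colour \<Rightarrow> tree \<Rightarrow> bool list \<Rightarrow> bool" where
  "maximal_mono c t p \<longleftrightarrow> mono_subtree c t p \<and>
     (\<forall>p'. strict_prefix p' p \<longrightarrow> \<not> mono_subtree c t p')"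

definition classification :: "tree \<Rightarrow> bool list \<Rightarrow> cls" where
  "classification t p =
     (if node_colour t p \<noteq> G \<and> maximal_mono (node_colour t p) t p then R else Bc)"

definition compatible :: "tree \<Rightarrow> bool" where
  "compatible t \<longleftrightarrow> card {p. maximal_mono B t p} \<le> 1"

text \<open>Pruning the subtree at a non-root position u: the parent of u is
  deleted and the sibling of u takes its place.\<close>
fun prune :: "tree \<Rightarrow> bool list \<Rightarrow> tree" where
  "prune (Node l r) [b] = (if b then l else r)"
| "prune (Node l r) (b # c # p) =
     (if b then Node l (prune r (c # p)) else Node (prune l (c # p)) r)"
| "prune t p = t"

text \<open>Regrafting s above the node at position v: a new node is inserted on
  the edge from v to its parent (or as new root), with children v and s.\<close>
fun graft :: "tree \<Rightarrow> bool list \<Rightarrow> tree \<Rightarrow> tree" where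
  "graft t [] s = Node t s"
| "graft (Node l r) (b # p) s =
     (if b then Node l (graft r p s) else Node (graft l p s) r)"
| "graft (Leaf c) (b # p) s = Leaf c"

text \<open>Position of node v (not in the subtree of u, not the parent of u)
  in the tree obtained by pruning u.\<close>
definition relocate :: "bool list \<Rightarrow> bool list \<Rightarrow> bool list" where
  "relocate u v =
     (let q = butlast u; b = last u in
      if prefix (q @ [\<not> b]) v then q @ drop (length q + 1) v else v)"

definition spr_valid :: "tree \<Rightarrow> bool list \<Rightarrow> bool list \<Rightarrow> bool" where
  "spr_valid t u v \<longleftrightarrow> u \<in> positions t \<and> u \<noteq> [] \<and> v \<in> positions t \<and>
     v \<noteq> u \<and> v \<noteq> butlast u \<and> \<not> prefix u v"

definition spr :: "tree \<Rightarrow> bool list \<Rightarrow> bool list \<Rightarrow> tree" where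
  "spr t u v = graft (prune t u) (relocate u v) (sub t u)"

end

theory Submission
  imports Defs
begin

lemma nil_pos[simp]: "[] \<in> positions t"
  by (cases t) auto

lemma sub_append: "sub x (p@q) = sub (sub x p) q"
proof (induction x p rule: sub.induct)
  case (3 c b p) then show ?case by (cases q) auto
qed auto

lemma pos_append: "(p@q \<in> positions x) \<longleftrightarrow> (p \<in> positions x \<and> q \<in> positions (sub x p))"
  by (induction x p rule: sub.induct) auto

lemma black_all: "tcolour y = B \<Longrightarrow> q \<in> positions y \<Longrightarrow> tcolour (sub y q) = B"
proof (induction y arbitrary: q)
  case (Leaf x) then show ?case by auto
next
  case (Node l r) then show ?case by (auto split: if_splits)
qed

lemma fin_pos: "finite (positions x)"
  by (induction x) auto

lemma graft_not_black: "r \<in> positions x \<Longrightarrow> tcolour s \<noteq> B \<Longrightarrow> tcolour (graft x r s) \<noteq> B"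
  by (induction x r s rule: graft.induct) auto

lemma graft_sub: "r1@r2 \<in> positions x \<Longrightarrow> r1 \<in> positions (graft x (r1@r2) s) \<and> sub (graft x (r1@r2) s) r1 = graft (sub x r1) r2 s"
  by (induction x r1 rule: sub.induct) auto

lemma relocate_Cons: "u \<noteq> [] \<Longrightarrow> relocate (c#u) (c#w) = c # relocate u w"
  by (auto simp: relocate_def Let_def)

lemma relocate_diff: "c \<noteq> b \<Longrightarrow> u \<noteq> [] \<Longrightarrow> relocate (b#u) (c#w) = c#w"
  by (auto simp: relocate_def Let_def)

lemma relocate_single: "relocate [b] (c#w) = (if c = b then c#w else w)"
  by (auto simp: relocate_def Let_def)

lemma relocate_append: "u \<noteq> [] \<Longrightarrow> \<not> prefix w u \<Longrightarrow> relocate u (w@z) = relocate u w @ z"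
proof -
  assume a: "u \<noteq> []" "\<not> prefix w u"
  define q where "q = butlast u"
  define b where "b = last u"
  have u: "u = q @ [b]" using a by (simp add: q_def b_def)
  show ?thesis
  proof (cases "prefix (q @ [\<not> b]) w")
    case True
    then obtain y where "w = q @ [\<not> b] @ y" by (auto simp: prefix_def)
    then show ?thesis using u by (simp add: relocate_def Let_def)
  next
    case False
    have "\<not> prefix (q @ [\<not> b]) (w @ z)"
    proof
      assume "prefix (q @ [\<not> b]) (w @ z)"
      then have "prefix (q @ [\<not> b]) w \<or> prefix w (q @ [\<not> b])"
        using prefix_same_cases prefix_append by blast
      with False have "prefix w (q @ [\<not> b])" by simp
      moreover have "w \<noteq> q @ [\<not> b]" using False by auto
      ultimately have "prefix w q"
        by (metis prefix_snoc)
      then show False using a(2) u by (metis prefix_append)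
    qed
    then show ?thesis using False u by (simp add: relocate_def Let_def)
  qed
qed

lemma prune_sub: "u \<in> positions t \<Longrightarrow> u \<noteq> [] \<Longrightarrow> w \<in> positions t \<Longrightarrow> \<not> prefix w u \<Longrightarrow> \<not> prefix u w \<Longrightarrow>
  relocate u w \<in> positions (prune t u) \<and> sub (prune t u) (relocate u w) = sub t w"
proof (induction u arbitrary: t w)
  case Nil then show ?case by simp
next
  case (Cons b u')
  then obtain l r where t: "t = Node l r" by (cases t) auto
  obtain c w' where w: "w = c # w'" using Cons by (cases w) auto
  show ?case
  proof (cases "u' = []")
    case True
    then show ?thesis using Cons t w by (auto simp: relocate_single)
  next
    case False
    then obtain d u'' where u': "u' = d # u''" by (cases u') auto
    show ?thesis
    proof (cases "c = b")
      case True
      then show ?thesis using Cons.IH[of "if b then r else l" w'] Cons.prems t w u'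
        by (auto simp: relocate_Cons)
    next
      case ne: False
      then show ?thesis using Cons.prems t w u' by (auto simp: relocate_diff)
    qed
  qed
qed


lemma mono_black: "p \<in> positions x \<Longrightarrow> tcolour (sub x p) = B \<Longrightarrow> mono_subtree B x p"
  unfolding mono_subtree_def node_colour_def
  by (auto simp: pos_append sub_append black_all)

theorem lemma3:
  fixes t :: tree and u v :: "bool list"
  assumes "spr_valid t u v"
    and "node_colour t u = W" and "classification t u = R"
    and "node_colour t v = B" and "classification t v = Bc"
  shows "\<not> compatible (spr t u v)"
proof -
  have uP: "u \<in> positions t" and un: "u \<noteq> []" and vP: "v \<in> positions t"
    and nuv: "\<not> prefix u v" using assms(1) by (auto simp: spr_valid_def)
  have uW: "tcolour (sub t u) = W" using assms(2) by (simp add: node_colour_def)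
  have vB: "tcolour (sub t v) = B" using assms(4) by (simp add: node_colour_def)
  have "\<not> maximal_mono B t v" using assms(4,5) by (simp add: classification_def split: if_splits)
  moreover have "mono_subtree B t v" using mono_black vP vB by blast
  ultimately obtain p' where sp: "strict_prefix p' v" and mp': "mono_subtree B t p'"
    unfolding maximal_mono_def by blast
  have vne: "v \<noteq> []" using sp by auto
  define p where "p = butlast v"
  define b where "b = last v"
  have v: "v = p @ [b]" using vne by (simp add: p_def b_def)
  have "prefix p' p" using sp v by (metis prefix_snoc strict_prefix_def)
  then obtain z where pz: "p = p' @ z" by (auto simp: prefix_def)
  have pP: "p \<in> positions t" using vP v pos_append by blast
  have "node_colour t (p' @ z) = B" using mp' pP pz unfolding mono_subtree_def by blast
  then have pB: "tcolour (sub t p) = B" using pz by (simp add: node_colour_def)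
  have "[b] \<in> positions (sub t p)" using vP v pos_append by blast
  then obtain l r where lr: "sub t p = Node l r" by (cases "sub t p") auto
  have lB: "tcolour l = B" and rB: "tcolour r = B" using pB lr by (auto split: if_splits)
  have npu: "\<not> prefix p u"
  proof
    assume "prefix p u"
    then obtain y where "u = p @ y" by (auto simp: prefix_def)
    then have "tcolour (sub t u) = B" using black_all[OF pB] uP pos_append sub_append by metis
    then show False using uW by simp
  qed
  have nup: "\<not> prefix u p" using nuv v by (metis prefix_order.trans prefix_snoc)
  define t0 where "t0 = prune t u"
  define rp where "rp = relocate u p"
  define s where "s = sub t u"
  have rpP: "rp \<in> positions t0" and st0: "sub t0 rp = Node l r"
    using prune_sub[OF uP un pP npu nup] lr by (auto simp: t0_def rp_def)
  have g: "relocate u v = rp @ [b]" using relocate_append[OF un npu] v rp_def by simp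
  define T where "T = graft t0 (rp @ [b]) s"
  have TT: "spr t u v = T" by (simp add: spr_def T_def t0_def s_def g)
  have gP: "rp @ [b] \<in> positions t0" using rpP st0 pos_append by auto
  have rpT: "rp \<in> positions T" and sT: "sub T rp = graft (Node l r) [b] s"
    using graft_sub[OF gP, of s] st0 by (auto simp: T_def)
  have sW: "tcolour s \<noteq> B" using uW s_def by simp
  have notB: "\<not> mono_subtree B T p'" if pr: "prefix p' (rp @ [b])" for p'
  proof
    assume m: "mono_subtree B T p'"
    obtain z where gz: "rp @ [b] = p' @ z" using pr by (rule prefixE)
    have "p' @ z \<in> positions t0" using gP gz by simp
    then have zP: "z \<in> positions (sub t0 p')" using pos_append by blast
    have "sub T p' = graft (sub t0 p') z s" using graft_sub[of p' z t0 s] gP gz by (simp add: T_def)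
    then have "tcolour (sub T p') \<noteq> B" using graft_not_black[OF zP sW] by simp
    moreover have "node_colour T p' = B" using m unfolding mono_subtree_def by (metis append_Nil2)
    ultimately show False by (simp add: node_colour_def)
  qed
  define P1 where "P1 = rp @ [b, False]"
  define P2 where "P2 = rp @ [\<not> b]"
  have P1: "maximal_mono B T P1"
  proof -
    have "[b, False] \<in> positions (sub T rp)" using sT by auto
    then have a: "P1 \<in> positions T" using rpT pos_append P1_def by blast
    have "tcolour (sub T P1) = B" using sT lB rB by (simp add: P1_def sub_append)
    then have "mono_subtree B T P1" using mono_black a by blast
    moreover have "prefix p' (rp @ [b])" if "strict_prefix p' P1" for p'
      using that unfolding P1_def
      by (metis append.assoc append_Cons append_Nil prefix_snoc strict_prefix_def)
    ultimately show ?thesis unfolding maximal_mono_def using notB by blast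
  qed
  have P2: "maximal_mono B T P2"
  proof -
    have "[\<not> b] \<in> positions (sub T rp)" using sT by auto
    then have a: "P2 \<in> positions T" using rpT pos_append P2_def by blast
    have "tcolour (sub T P2) = B" using sT lB rB by (simp add: P2_def sub_append)
    then have "mono_subtree B T P2" using mono_black a by blast
    moreover have "prefix p' (rp @ [b])" if "strict_prefix p' P2" for p'
      using that unfolding P2_def
      by (metis prefix_snoc strict_prefix_def prefix_order.trans prefix_append)
    ultimately show ?thesis unfolding maximal_mono_def using notB by blast
  qed
  have ne: "P1 \<noteq> P2" by (simp add: P1_def P2_def)
  have fin: "finite {p. maximal_mono B T p}"
    by (rule finite_subset[OF _ fin_pos[of T]]) (auto simp: maximal_mono_def mono_subtree_def)
  have "card {P1, P2} \<le> card {p. maximal_mono B T p}"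
    by (rule card_mono[OF fin]) (use P1 P2 in auto)
  then have "card {p. maximal_mono B T p} \<ge> 2" using ne by simp
  then show ?thesis using TT by (simp add: compatible_def)
qed

end
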